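(* Let $G$ be a finite simple graph with diameter $2$. Then $G$ is $\chi_\rho$-critical if and only if for each edge $e=u_1u_2 \in E(G)$ at least one of the following statements holds: (i) $\alpha(G-e)>\alpha(G)$; (ii) there exist indices $\{i,j\}=\{1,2\}$, a vertex $y \in N_G[u_i]$ with $d_{G-e}(y,u_j) \geq 3$, and a maximum independent set $A$ of $G$ (i.e., $|A|=\alpha(G)$) such that $A \cap \{y, u_j\}= \emptyset$.
   Context: $N_G[v]=N_G(v)\cup\{v\}$ is the closed neighborhood; $\alpha(G)$ is the independence number. A $k$-packing coloring of $G$ is a map $c:V(G)\to\{1,\ldots,k\}$ such that two distinct vertices $u,v$ with $c(u)=c(v)=i$ satisfy $d_G(u,v)>i$ (distance between vertices in different components is infinite); $\chi_\rho(G)$ is the smallest $k$ for which such a coloring exists. $G$ is $\chi_\rho$-critical if $\chi_\rho(H)<\chi_\rho(G)$ for every proper subgraph $H$ of $G$. $G-e$ is $G$ with edge $e$ deleted. *)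

theory Defs
  imports Main "HOL-Library.Extended_Nat"
begin

definition simple_graph :: "'a set \<Rightarrow> 'a set set \<Rightarrow> bool" where
  "simple_graph V E \<longleftrightarrow> finite V \<and> (\<forall>e\<in>E. \<exists>u v. e = {u, v} \<and> u \<noteq> v \<and> u \<in> V \<and> v \<in> V)"

definition walk :: "'a set \<Rightarrow> 'a set set \<Rightarrow> 'a list \<Rightarrow> bool" where
  "walk V E xs \<longleftrightarrow> xs \<noteq> [] \<and> set xs \<subseteq> V \<and>
     (\<forall>i. Suc i < length xs \<longrightarrow> {xs ! i, xs ! Suc i} \<in> E)"

text \<open>Graph distance; infinite if no walk exists.\<close>
definition gdist :: "'a set \<Rightarrow> 'a set set \<Rightarrow> 'a \<Rightarrow> 'a \<Rightarrow> enat" where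
  "gdist V E u v = (INF xs \<in> {xs. walk V E xs \<and> hd xs = u \<and> last xs = v}. enat (length xs - 1))"

definition diameter :: "'a set \<Rightarrow> 'a set set \<Rightarrow> enat" where
  "diameter V E = (SUP p \<in> V \<times> V. gdist V E (fst p) (snd p))"

definition closed_nbhd :: "'a set \<Rightarrow> 'a set set \<Rightarrow> 'a \<Rightarrow> 'a set" where
  "closed_nbhd V E u = insert u {y \<in> V. {u, y} \<in> E}"

definition independent :: "'a set \<Rightarrow> 'a set set \<Rightarrow> 'a set \<Rightarrow> bool" where
  "independent V E A \<longleftrightarrow> A \<subseteq> V \<and> (\<forall>u\<in>A. \<forall>v\<in>A. {u, v} \<notin> E)"

definition indep_num :: "'a set \<Rightarrow> 'a set set \<Rightarrow> nat" where
  "indep_num V E = Max (card ` {A. independent V E A})"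

definition packing_coloring :: "'a set \<Rightarrow> 'a set set \<Rightarrow> nat \<Rightarrow> ('a \<Rightarrow> nat) \<Rightarrow> bool" where
  "packing_coloring V E k c \<longleftrightarrow> (\<forall>v\<in>V. c v \<in> {1..k}) \<and>
     (\<forall>u\<in>V. \<forall>v\<in>V. u \<noteq> v \<and> c u = c v \<longrightarrow> gdist V E u v > enat (c u))"

definition packing_chromatic :: "'a set \<Rightarrow> 'a set set \<Rightarrow> nat" where
  "packing_chromatic V E = (LEAST k. \<exists>c. packing_coloring V E k c)"

definition subgraph :: "'a set \<Rightarrow> 'a set set \<Rightarrow> 'a set \<Rightarrow> 'a set set \<Rightarrow> bool" where
  "subgraph V' E' V E \<longleftrightarrow> V' \<subseteq> V \<and> E' \<subseteq> E \<and> (\<forall>e\<in>E'. e \<subseteq> V')"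

definition chi_rho_critical :: "'a set \<Rightarrow> 'a set set \<Rightarrow> bool" where
  "chi_rho_critical V E \<longleftrightarrow> (\<forall>V' E'. subgraph V' E' V E \<and> (V', E') \<noteq> (V, E) \<longrightarrow>
      packing_chromatic V' E' < packing_chromatic V E)"

end

theory Submission
  imports Defs
begin


lemma walk_single[simp]: "walk V E [x] \<longleftrightarrow> x \<in> V"
  unfolding walk_def by simp

lemma walk_Cons2[simp]: "walk V E (x # y # xs) \<longleftrightarrow> x \<in> V \<and> {x, y} \<in> E \<and> walk V E (y # xs)"
proof
  assume w: "walk V E (x # y # xs)"
  then have s: "set (x # y # xs) \<subseteq> V" and a: "\<And>i. Suc i < length (x # y # xs) \<Longrightarrow> {(x # y # xs) ! i, (x # y # xs) ! Suc i} \<in> E"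
    unfolding walk_def by blast+
  have "{x, y} \<in> E" using a[of 0] by simp
  moreover have "walk V E (y # xs)" unfolding walk_def
  proof (intro conjI allI impI)
    show "y # xs \<noteq> []" by simp
    show "set (y # xs) \<subseteq> V" using s by simp
    fix i assume "Suc i < length (y # xs)"
    then have "Suc (Suc i) < length (x # y # xs)" by simp
    from a[OF this] show "{(y # xs) ! i, (y # xs) ! Suc i} \<in> E" by simp
  qed
  ultimately show "x \<in> V \<and> {x, y} \<in> E \<and> walk V E (y # xs)" using s by simp
next
  assume h: "x \<in> V \<and> {x, y} \<in> E \<and> walk V E (y # xs)"
  show "walk V E (x # y # xs)" unfolding walk_def
  proof (intro conjI allI impI)
    show "x # y # xs \<noteq> []" by simp
    show "set (x # y # xs) \<subseteq> V" using h unfolding walk_def by simp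
    fix i assume i: "Suc i < length (x # y # xs)"
    show "{(x # y # xs) ! i, (x # y # xs) ! Suc i} \<in> E"
    proof (cases i)
      case 0 then show ?thesis using h by simp
    next
      case (Suc j)
      have "Suc j < length (y # xs)" using i Suc by simp
      then have "{(y # xs) ! j, (y # xs) ! Suc j} \<in> E" using h unfolding walk_def by blast
      then show ?thesis using Suc by simp
    qed
  qed
qed

lemma enat_fin1: "(d::enat) \<le> 1 \<Longrightarrow> d \<noteq> \<infinity>" by (cases d) (auto simp: one_enat_def)
lemma enat_fin2: "(d::enat) \<le> numeral k \<Longrightarrow> d \<noteq> \<infinity>" by (cases d) auto

lemma enat2: "enat 2 = 2" by (rule numeral_eq_enat[symmetric])
lemma enat3: "enat 3 = 3" by (rule numeral_eq_enat[symmetric])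

lemma gdist_le_walk: "walk V E xs \<Longrightarrow> gdist V E (hd xs) (last xs) \<le> enat (length xs - 1)"
  unfolding gdist_def by (rule INF_lower) simp

lemma gdist_attain:
  assumes "gdist V E u v \<noteq> \<infinity>"
  shows "\<exists>xs. walk V E xs \<and> hd xs = u \<and> last xs = v \<and> gdist V E u v = enat (length xs - 1)"
proof -
  let ?S = "(\<lambda>xs. enat (length xs - 1)) ` {xs. walk V E xs \<and> hd xs = u \<and> last xs = v}"
  have g: "gdist V E u v = Inf ?S" unfolding gdist_def by simp
  have ne: "?S \<noteq> {}"
  proof
    assume "?S = {}"
    then have "Inf ?S = \<infinity>" by (simp only: Inf_enat_def) simp
    with assms g show False by simp
  qed
  have i: "Inf ?S = (LEAST x. x \<in> ?S)" unfolding Inf_enat_def by (rule if_not_P[OF ne])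
  obtain y where "y \<in> ?S" using ne by blast
  then have "(LEAST x. x \<in> ?S) \<in> ?S" by (rule LeastI)
  then have "Inf ?S \<in> ?S" by (simp only: i)
  then obtain xs where x1: "xs \<in> {xs. walk V E xs \<and> hd xs = u \<and> last xs = v}" and x2: "Inf ?S = enat (length xs - 1)"
    by (rule imageE)
  have "gdist V E u v = enat (length xs - 1)" using g x2 by (rule trans)
  with x1 show ?thesis by blast
qed

lemma walk_rev: "walk V E xs \<Longrightarrow> walk V E (rev xs)"
  unfolding walk_def
proof (intro conjI allI impI)
  assume w: "xs \<noteq> [] \<and> set xs \<subseteq> V \<and> (\<forall>i. Suc i < length xs \<longrightarrow> {xs ! i, xs ! Suc i} \<in> E)"
  show "rev xs \<noteq> []" "set (rev xs) \<subseteq> V" using w by auto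
  fix i assume i: "Suc i < length (rev xs)"
  define j where "j = length xs - 2 - i"
  have "Suc j < length xs" using i j_def by simp
  then have "{xs ! j, xs ! Suc j} \<in> E" using w by blast
  moreover have e1: "length xs - Suc i = Suc j" "length xs - Suc (Suc i) = j" using i j_def by simp_all
  moreover have "rev xs ! i = xs ! (length xs - Suc i)" using i by (simp add: rev_nth)
  moreover have "rev xs ! Suc i = xs ! (length xs - Suc (Suc i))" using i by (simp add: rev_nth)
  ultimately show "{rev xs ! i, rev xs ! Suc i} \<in> E" by (simp only: insert_commute)
qed

lemma gdist_sym_le: "gdist V E v u \<le> gdist V E u v"
  unfolding gdist_def
proof (rule INF_greatest)
  fix xs assume "xs \<in> {xs. walk V E xs \<and> hd xs = u \<and> last xs = v}"
  then have "rev xs \<in> {xs. walk V E xs \<and> hd xs = v \<and> last xs = u}"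
    by (auto simp: walk_rev hd_rev last_rev)
  then show "(INF xs\<in>{xs. walk V E xs \<and> hd xs = v \<and> last xs = u}. enat (length xs - 1)) \<le> enat (length xs - 1)"
    by (metis (no_types, lifting) INF_lower length_rev)
qed

lemma gdist_sym: "gdist V E u v = gdist V E v u"
  by (simp add: antisym gdist_sym_le)

lemma walk_mono: "walk V' E' xs \<Longrightarrow> V' \<subseteq> V \<Longrightarrow> E' \<subseteq> E \<Longrightarrow> walk V E xs"
  unfolding walk_def by blast

lemma gdist_mono: "V' \<subseteq> V \<Longrightarrow> E' \<subseteq> E \<Longrightarrow> gdist V E u v \<le> gdist V' E' u v"
  unfolding gdist_def
  by (rule INF_superset_mono) (auto intro: walk_mono)

lemma gdist_edge: "x \<in> V \<Longrightarrow> z \<in> V \<Longrightarrow> {x, z} \<in> E \<Longrightarrow> gdist V E x z \<le> 1"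
  using gdist_le_walk[of V E "[x, z]"] by (simp add: one_enat_def)

lemma gdist_self: "x \<in> V \<Longrightarrow> gdist V E x x = 0"
proof -
  assume "x \<in> V"
  then have "gdist V E x x \<le> enat 0" using gdist_le_walk[of V E "[x]"] by simp
  then show ?thesis by (metis le_zero_eq zero_enat_def)
qed

lemma gdist_path2: "x \<in> V \<Longrightarrow> w \<in> V \<Longrightarrow> z \<in> V \<Longrightarrow> {x, w} \<in> E \<Longrightarrow> {w, z} \<in> E \<Longrightarrow> gdist V E x z \<le> 2"
  using gdist_le_walk[of V E "[x, w, z]"] by (simp add: numeral_2_eq_2[symmetric] enat2)

lemma gdist_path3: "x \<in> V \<Longrightarrow> w \<in> V \<Longrightarrow> w' \<in> V \<Longrightarrow> z \<in> V \<Longrightarrow> {x, w} \<in> E \<Longrightarrow> {w, w'} \<in> E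
   \<Longrightarrow> {w', z} \<in> E \<Longrightarrow> gdist V E x z \<le> 3"
  using gdist_le_walk[of V E "[x, w, w', z]"] by (simp add: numeral_3_eq_3[symmetric] enat3)

lemma gdist_le2_cases:
  assumes "gdist V E x z \<le> 2" "x \<noteq> z"
  shows "(x \<in> V \<and> z \<in> V \<and> {x, z} \<in> E) \<or> (\<exists>w\<in>V. x \<in> V \<and> z \<in> V \<and> {x, w} \<in> E \<and> {w, z} \<in> E)"
proof -
  have fin: "gdist V E x z \<noteq> \<infinity>" using assms(1) by (rule enat_fin2)
  obtain xs where xs: "walk V E xs" "hd xs = x" "last xs = z" "gdist V E x z = enat (length xs - 1)"
    using gdist_attain[OF fin] by blast
  have "enat (length xs - 1) \<le> enat 2" using xs(4) assms(1) by (simp add: enat2)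
  then have len: "length xs \<le> 3" by simp
  have "xs \<noteq> []" using xs(1) unfolding walk_def by simp
  have "length xs \<noteq> 1"
  proof
    assume "length xs = 1"
    then obtain a where "xs = [a]" by (metis One_nat_def length_0_conv length_Suc_conv)
    then show False using xs(2,3) assms(2) by simp
  qed
  then have "length xs = 2 \<or> length xs = 3" using len \<open>xs \<noteq> []\<close> by (cases "length xs") auto
  then show ?thesis
  proof
    assume "length xs = 2"
    then obtain a b where ab: "xs = [a, b]" by (auto simp: length_Suc_conv numeral_2_eq_2)
    have "a = x" "b = z" using xs(2,3) ab by simp_all
    then have "walk V E [x, z]" using xs(1) ab by simp
    then show ?thesis by simp
  next
    assume "length xs = 3"
    then obtain a b c where ab: "xs = [a, b, c]" by (auto simp: length_Suc_conv numeral_3_eq_3)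
    have "a = x" "c = z" using xs(2,3) ab by simp_all
    then have "walk V E [x, b, z]" using xs(1) ab by simp
    then show ?thesis by (simp, blast)
  qed
qed

lemma gdist_gt1:
  assumes "x \<noteq> z" "{x, z} \<notin> E"
  shows "gdist V E x z > 1"
proof (rule ccontr)
  assume "\<not> gdist V E x z > 1"
  then have le: "gdist V E x z \<le> 1" by simp
  have fin: "gdist V E x z \<noteq> \<infinity>" using le by (rule enat_fin1)
  obtain xs where xs: "walk V E xs" "hd xs = x" "last xs = z" "gdist V E x z = enat (length xs - 1)"
    using gdist_attain[OF fin] by blast
  have len: "length xs \<le> 2" using xs(4) le by (simp add: one_enat_def)
  have "xs \<noteq> []" using xs(1) unfolding walk_def by simp
  have "length xs \<noteq> 1"
  proof
    assume "length xs = 1"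
    then obtain a where "xs = [a]" by (metis One_nat_def length_0_conv length_Suc_conv)
    then show False using xs(2,3) assms(1) by simp
  qed
  then have "length xs = 2" using len \<open>xs \<noteq> []\<close> by (cases "length xs") auto
  then obtain a b where ab: "xs = [a, b]" by (auto simp: length_Suc_conv numeral_2_eq_2)
  have "a = x" "b = z" using xs(2,3) ab by simp_all
  then have "walk V E [x, z]" using xs(1) ab by simp
  then show False using assms by simp
qed

lemma three_le_iff: "(3::enat) \<le> d \<longleftrightarrow> enat 2 < d"
  apply (subst enat3[symmetric]) by (cases d) auto



lemma sg_finite: "simple_graph V E \<Longrightarrow> finite V"
  unfolding simple_graph_def by simp

lemma sg_edge: "simple_graph V E \<Longrightarrow> e \<in> E \<Longrightarrow> \<exists>u v. e = {u, v} \<and> u \<noteq> v \<and> u \<in> V \<and> v \<in> V"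
  unfolding simple_graph_def by blast

lemma sg_edge_V: "simple_graph V E \<Longrightarrow> {u, v} \<in> E \<Longrightarrow> u \<in> V \<and> v \<in> V \<and> u \<noteq> v"
proof -
  assume a: "simple_graph V E" "{u, v} \<in> E"
  obtain a b where "{u, v} = {a, b}" "a \<noteq> b" "a \<in> V" "b \<in> V" using sg_edge[OF a] by blast
  then show ?thesis by (auto simp: doubleton_eq_iff)
qed

lemma sg_edge_sub: "simple_graph V E \<Longrightarrow> e \<in> E \<Longrightarrow> e \<subseteq> V"
  unfolding simple_graph_def by fastforce

lemma indep_fin: "finite V \<Longrightarrow> finite (card ` {A. independent V E A})"
proof -
  assume "finite V"
  moreover have "{A. independent V E A} \<subseteq> Pow V" unfolding independent_def by blast
  ultimately have "finite {A. independent V E A}" using finite_subset by (metis finite_Pow_iff)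
  then show ?thesis by (rule finite_imageI)
qed

lemma indep_le: "finite V \<Longrightarrow> independent V E A \<Longrightarrow> card A \<le> indep_num V E"
  unfolding indep_num_def by (rule Max_ge) (auto intro: indep_fin)

lemma indep_ex: "finite V \<Longrightarrow> \<exists>A. independent V E A \<and> card A = indep_num V E"
proof -
  assume f: "finite V"
  have "{} \<in> {A. independent V E A}" unfolding independent_def by simp
  then have "card ` {A. independent V E A} \<noteq> {}" by blast
  then have "indep_num V E \<in> card ` {A. independent V E A}"
    unfolding indep_num_def by (rule Max_in[OF indep_fin[OF f]])
  then show ?thesis by force
qed

lemma indep_num_le: "finite V \<Longrightarrow> indep_num V E \<le> card V"
proof -
  assume f: "finite V"
  obtain A where A: "independent V E A" "card A = indep_num V E" using indep_ex[OF f] by blast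
  have "A \<subseteq> V" using A(1) unfolding independent_def by blast
  then have "card A \<le> card V" using f by (rule card_mono[rotated])
  then show ?thesis using A(2) by simp
qed

lemma indep_sub: "independent V E A \<Longrightarrow> E' \<subseteq> E \<Longrightarrow> independent V E' A"
  unfolding independent_def by blast

lemma pc_le: "packing_coloring V E k c \<Longrightarrow> packing_chromatic V E \<le> k"
  unfolding packing_chromatic_def by (rule Least_le) blast

lemma pc_ex: "finite V \<Longrightarrow> \<exists>c. packing_coloring V E (card V) c"
proof -
  assume f: "finite V"
  obtain h where h: "bij_betw h V {0..<card V}" using ex_bij_betw_finite_nat[OF f] by blast
  have "packing_coloring V E (card V) (\<lambda>v. h v + 1)"
    unfolding packing_coloring_def
  proof (intro conjI ballI impI)
    fix v assume "v \<in> V"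
    then have "h v \<in> {0..<card V}" by (rule bij_betw_apply[OF h])
    then have "h v < card V" by simp
    then show "h v + 1 \<in> {1..card V}" by simp
  next
    fix u v assume uv: "u \<in> V" "v \<in> V" "u \<noteq> v \<and> h u + 1 = h v + 1"
    have inj: "inj_on h V" using h by (rule bij_betw_imp_inj_on)
    have "h u = h v" using uv(3) by simp
    then have "u = v" using inj_onD[OF inj _ uv(1,2)] by blast
    then have False using uv(3) by simp
    then show "enat (h u + 1) < gdist V E u v" by simp
  qed
  then show ?thesis by blast
qed

lemma pc_attain: "finite V \<Longrightarrow> \<exists>c. packing_coloring V E (packing_chromatic V E) c"
  unfolding packing_chromatic_def by (rule LeastI_ex) (use pc_ex in blast)

lemma L1:
  assumes f: "finite V" and A: "independent V E A"
  shows "packing_chromatic V E \<le> card V - card A + 1"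
proof -
  let ?B = "V - A"
  obtain h where h: "bij_betw h ?B {0..<card ?B}" using ex_bij_betw_finite_nat[OF finite_Diff[OF f]] by blast
  have AV: "A \<subseteq> V" using A unfolding independent_def by blast
  have cB: "card ?B = card V - card A" using AV f by (meson card_Diff_subset finite_subset)
  define c where "c v = (if v \<in> A then 1 else h v + 2)" for v
  have "packing_coloring V E (card ?B + 1) c"
    unfolding packing_coloring_def
  proof (intro conjI ballI impI)
    fix v assume v: "v \<in> V"
    show "c v \<in> {1..card ?B + 1}"
    proof (cases "v \<in> A")
      case True then show ?thesis by (simp add: c_def)
    next
      case False
      then have "v \<in> ?B" using v by blast
      then have "h v \<in> {0..<card ?B}" by (rule bij_betw_apply[OF h])
      then have "h v < card ?B" by simp
      then show ?thesis using False by (simp add: c_def)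
    qed
  next
    fix u v assume u: "u \<in> V" and v: "v \<in> V" and uv: "u \<noteq> v \<and> c u = c v"
    show "enat (c u) < gdist V E u v"
    proof (cases "u \<in> A")
      case True
      have cu: "c u = 1" using True by (simp add: c_def)
      have "v \<in> A"
      proof (rule ccontr)
        assume "v \<notin> A"
        then have "c v \<noteq> 1" by (simp add: c_def)
        with uv cu show False by simp
      qed
      then have "{u, v} \<notin> E" using A True unfolding independent_def by blast
      then have "1 < gdist V E u v" using uv gdist_gt1[of u v E V] by blast
      then show ?thesis using cu by (simp add: one_enat_def)
    next
      case False
      have "v \<notin> A"
      proof
        assume "v \<in> A"
        then have "c v = 1" by (simp add: c_def)
        moreover have "c u \<noteq> 1" using False by (simp add: c_def)
        ultimately show False using uv by simp
      qed
      then have "h u = h v" using uv False by (simp add: c_def)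
      moreover have "inj_on h ?B" using h by (rule bij_betw_imp_inj_on)
      ultimately have "u = v" using u v False \<open>v \<notin> A\<close> unfolding inj_on_def by blast
      then show ?thesis using uv by simp
    qed
  qed
  then have "packing_chromatic V E \<le> card ?B + 1" by (rule pc_le)
  then show ?thesis using cB by simp
qed

lemma L2:
  assumes f: "finite V" and A: "independent V E A" and y: "y \<in> V" and b: "b \<in> V" and yb: "y \<noteq> b"
    and yA: "y \<notin> A" and bA: "b \<notin> A" and far: "enat 2 < gdist V E y b"
  shows "packing_chromatic V E \<le> card V - card A"
proof -
  let ?B = "V - A - {y, b}"
  obtain h where h: "bij_betw h ?B {0..<card ?B}" using ex_bij_betw_finite_nat[OF finite_Diff[OF finite_Diff[OF f]]] by blast
  have AV: "A \<subseteq> V" using A unfolding independent_def by blast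
  have c1: "card (V - A) = card V - card A" using AV f by (meson card_Diff_subset finite_subset)
  have sub: "{y, b} \<subseteq> V - A" using y b yA bA by blast
  have c2: "card {y, b} = 2" using yb by simp
  have c3: "card ?B = card (V - A) - 2" using sub c2 f
    by (metis card_Diff_subset finite_Diff finite_subset)
  have c4: "card (V - A) \<ge> 2" using sub c2 f by (metis card_mono finite_Diff)
  define c where "c v = (if v \<in> A then 1 else if v \<in> {y, b} then 2 else h v + 3)" for v
  have "packing_coloring V E (card ?B + 2) c"
    unfolding packing_coloring_def
  proof (intro conjI ballI impI)
    fix v assume v: "v \<in> V"
    show "c v \<in> {1..card ?B + 2}"
    proof (cases "v \<in> A \<or> v \<in> {y, b}")
      case True then show ?thesis by (auto simp add: c_def)
    next
      case False
      then have "v \<in> ?B" using v by blast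
      then have "h v \<in> {0..<card ?B}" by (rule bij_betw_apply[OF h])
      then have "h v < card ?B" by simp
      then show ?thesis using False by (simp add: c_def)
    qed
  next
    fix u v assume u: "u \<in> V" and v: "v \<in> V" and uv: "u \<noteq> v \<and> c u = c v"
    have c1: "c w = 1 \<longleftrightarrow> w \<in> A" for w by (simp add: c_def)
    have c2: "c w = 2 \<longleftrightarrow> w \<notin> A \<and> w \<in> {y, b}" for w by (simp add: c_def)
    have c3: "w \<notin> A \<Longrightarrow> w \<notin> {y, b} \<Longrightarrow> c w = h w + 3" for w by (simp add: c_def)
    show "enat (c u) < gdist V E u v"
    proof (cases "u \<in> A")
      case True
      have cu: "c u = 1" using True c1 by blast
      have "v \<in> A" using c1 uv cu by metis
      then have "{u, v} \<notin> E" using A True unfolding independent_def by blast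
      then have "1 < gdist V E u v" using uv gdist_gt1[of u v E V] by blast
      then show ?thesis using cu by (simp add: one_enat_def)
    next
      case False
      show ?thesis
      proof (cases "u \<in> {y, b}")
        case True
        have cu: "c u = 2" using True False c2 by blast
        have "v \<notin> A \<and> v \<in> {y, b}" using c2 uv cu by metis
        then have "(u = y \<and> v = b) \<or> (u = b \<and> v = y)" using True uv by blast
        then have "enat 2 < gdist V E u v" using far gdist_sym[of V E y b] by auto
        then show ?thesis using cu by simp
      next
        case F2: False
        have cu: "c u = h u + 3" using c3 False F2 by blast
        have "v \<notin> A"
        proof
          assume "v \<in> A"
          then have "c v = 1" using c1 by blast
          with uv cu show False by simp
        qed
        moreover have "v \<notin> {y, b}"
        proof
          assume "v \<in> {y, b}"
          then have "c v = 2" using c2 \<open>v \<notin> A\<close> by blast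
          with uv cu show False by simp
        qed
        ultimately have "c v = h v + 3" using c3 by blast
        then have "h u = h v" using uv cu by simp
        moreover have "inj_on h ?B" using h by (rule bij_betw_imp_inj_on)
        ultimately have "u = v" using u v False F2 \<open>v \<notin> A\<close> \<open>v \<notin> {y, b}\<close> unfolding inj_on_def by blast
        then show ?thesis using uv by simp
      qed
    qed
  qed
  then have "packing_chromatic V E \<le> card ?B + 2" by (rule pc_le)
  then show ?thesis using c1 c3 c4 by simp
qed



lemma nf1: "(d::enat) \<le> 1 \<Longrightarrow> enat 2 < d \<Longrightarrow> False"
  by (cases d) (auto simp: one_enat_def)

lemma nf2: "(d::enat) \<le> 2 \<Longrightarrow> enat 2 < d \<Longrightarrow> False"
  by (cases d) (auto simp: enat2[symmetric])

lemma nf3: "(d::enat) \<le> 3 \<Longrightarrow> enat k < d \<Longrightarrow> 3 \<le> k \<Longrightarrow> False"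
  by (cases d) (auto simp: enat3[symmetric])

lemma diam_le: "diameter V E = 2 \<Longrightarrow> u \<in> V \<Longrightarrow> v \<in> V \<Longrightarrow> gdist V E u v \<le> 2"
proof -
  assume d: "diameter V E = 2" and u: "u \<in> V" and v: "v \<in> V"
  have "(u, v) \<in> V \<times> V" using u v by simp
  then have "gdist V E (fst (u, v)) (snd (u, v)) \<le> diameter V E"
    unfolding diameter_def by (rule SUP_upper)
  then show ?thesis using d by simp
qed

lemma diam_ne: "diameter V E = 2 \<Longrightarrow> V \<noteq> {}"
proof
  assume d: "diameter V E = 2" and "V = {}"
  then have "diameter V E = 0" unfolding diameter_def by (simp add: bot_enat_def)
  with d show False by simp
qed

lemma diam_other: "diameter V E = 2 \<Longrightarrow> v \<in> V \<Longrightarrow> \<exists>u\<in>V. u \<noteq> v"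
proof (rule ccontr)
  assume d: "diameter V E = 2" and v: "v \<in> V" and n: "\<not> (\<exists>u\<in>V. u \<noteq> v)"
  then have "V = {v}" by blast
  then have "diameter V E = gdist V E v v" unfolding diameter_def by simp
  also have "\<dots> = 0" using v by (rule gdist_self)
  finally show False using d by simp
qed

lemma L3:
  assumes sg: "simple_graph V E" and ne: "V \<noteq> {}"
    and d2: "\<And>u v. u \<in> V \<Longrightarrow> v \<in> V \<Longrightarrow> gdist V E u v \<le> 2"
    and pc: "packing_coloring V E k c"
  shows "card V - indep_num V E + 1 \<le> k"
proof -
  have f: "finite V" using sg by (rule sg_finite)
  have rng: "\<And>v. v \<in> V \<Longrightarrow> c v \<in> {1..k}" using pc unfolding packing_coloring_def by blast
  have sep: "\<And>u v. u \<in> V \<Longrightarrow> v \<in> V \<Longrightarrow> u \<noteq> v \<Longrightarrow> c u = c v \<Longrightarrow> enat (c u) < gdist V E u v"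
    using pc unfolding packing_coloring_def by blast
  define C1 where "C1 = {v \<in> V. c v = 1}"
  have ind: "independent V E C1" unfolding independent_def
  proof (intro conjI ballI)
    show "C1 \<subseteq> V" unfolding C1_def by blast
    fix u v assume u: "u \<in> C1" and v: "v \<in> C1"
    show "{u, v} \<notin> E"
    proof
      assume uvE: "{u, v} \<in> E"
      have uv: "u \<in> V" "v \<in> V" "u \<noteq> v" using sg_edge_V[OF sg uvE] by auto
      have cu: "c u = 1" "c v = 1" using u v unfolding C1_def by auto
      have "enat (c u) < gdist V E u v" using sep[OF uv] cu by simp
      then have "enat 1 < gdist V E u v" using cu by simp
      moreover have "gdist V E u v \<le> 1" using gdist_edge[OF uv(1,2) uvE] .
      ultimately show False by (simp add: one_enat_def)
    qed
  qed
  have cC1: "card C1 \<le> indep_num V E" using indep_le[OF f ind] .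
  define R where "R = V - C1"
  have injR: "inj_on c R"
  proof (rule inj_onI)
    fix u v assume u: "u \<in> R" and v: "v \<in> R" and cuv: "c u = c v"
    show "u = v"
    proof (rule ccontr)
      assume "u \<noteq> v"
      moreover have uV: "u \<in> V" "v \<in> V" using u v unfolding R_def by auto
      ultimately have lt: "enat (c u) < gdist V E u v" using sep cuv by blast
      have "c u \<in> {1..k}" "c u \<noteq> 1" using rng[OF uV(1)] u unfolding R_def C1_def by auto
      then have "c u \<ge> 2" by simp
      then have "enat 2 \<le> enat (c u)" by simp
      then have "enat 2 < gdist V E u v" using lt by (rule le_less_trans)
      moreover have "gdist V E u v \<le> 2" using d2[OF uV] .
      ultimately show False using nf2 by blast
    qed
  qed
  have img: "c ` R \<subseteq> {2..k}"
  proof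
    fix x assume "x \<in> c ` R"
    then obtain v where v: "v \<in> R" "x = c v" by blast
    then have "c v \<in> {1..k}" "c v \<noteq> 1" using rng unfolding R_def C1_def by auto
    then show "x \<in> {2..k}" using v by simp
  qed
  have "card (c ` R) \<le> card {2..k}" using img by (rule card_mono[rotated]) simp
  then have cR: "card R \<le> k - 1" using card_image[OF injR] by simp
  have "C1 \<subseteq> V" unfolding C1_def by blast
  then have cR2: "card R = card V - card C1" unfolding R_def using f by (meson card_Diff_subset finite_subset)
  obtain v where "v \<in> V" using ne by blast
  then have "c v \<in> {1..k}" by (rule rng)
  then have "k \<ge> 1" by simp
  then show ?thesis using cR cR2 cC1 by linarith
qed

lemma chi_eq:
  assumes sg: "simple_graph V E" and d: "diameter V E = 2"
  shows "packing_chromatic V E = card V - indep_num V E + 1"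
proof (rule antisym)
  have f: "finite V" using sg by (rule sg_finite)
  obtain A where A: "independent V E A" "card A = indep_num V E" using indep_ex[OF f] by blast
  show "packing_chromatic V E \<le> card V - indep_num V E + 1" using L1[OF f A(1)] A(2) by simp
  obtain c where c: "packing_coloring V E (packing_chromatic V E) c" using pc_attain[OF f] by blast
  show "card V - indep_num V E + 1 \<le> packing_chromatic V E"
    using L3[OF sg diam_ne[OF d] diam_le[OF d] c] .
qed

lemma pc_mono:
  assumes sub: "subgraph V' E' V E" and f: "finite V"
  shows "packing_chromatic V' E' \<le> packing_chromatic V E"
proof -
  obtain c where c: "packing_coloring V E (packing_chromatic V E) c" using pc_attain[OF f] by blast
  have VV: "V' \<subseteq> V" and EE: "E' \<subseteq> E" using sub unfolding subgraph_def by blast+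
  have "packing_coloring V' E' (packing_chromatic V E) c"
    unfolding packing_coloring_def
  proof (intro conjI ballI impI)
    fix v assume "v \<in> V'"
    then show "c v \<in> {1..packing_chromatic V E}" using c VV unfolding packing_coloring_def by blast
  next
    fix u v assume "u \<in> V'" "v \<in> V'" "u \<noteq> v \<and> c u = c v"
    then have "enat (c u) < gdist V E u v" using c VV unfolding packing_coloring_def by blast
    also have "\<dots> \<le> gdist V' E' u v" using VV EE by (rule gdist_mono)
    finally show "enat (c u) < gdist V' E' u v" .
  qed
  then show ?thesis by (rule pc_le)
qed



lemma cn_self: "u \<in> closed_nbhd V E u"
  unfolding closed_nbhd_def by simp

lemma cn_adj: "y \<in> V \<Longrightarrow> {u, y} \<in> E \<Longrightarrow> y \<in> closed_nbhd V E u"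
  unfolding closed_nbhd_def by simp

lemma F1:
  assumes sg: "simple_graph V E" and d2: "\<And>u v. u \<in> V \<Longrightarrow> v \<in> V \<Longrightarrow> gdist V E u v \<le> 2"
    and e: "e = {u1, u2}" and x: "x \<in> V" and z: "z \<in> V" and xz: "x \<noteq> z"
    and far: "enat 2 < gdist V (E - {e}) x z"
  shows "(x = u1 \<and> z \<in> closed_nbhd V E u2) \<or> (x = u2 \<and> z \<in> closed_nbhd V E u1)
     \<or> (z = u1 \<and> x \<in> closed_nbhd V E u2) \<or> (z = u2 \<and> x \<in> closed_nbhd V E u1)"
proof -
  from gdist_le2_cases[OF d2[OF x z] xz] show ?thesis
  proof
    assume h: "x \<in> V \<and> z \<in> V \<and> {x, z} \<in> E"
    have "{x, z} = e"
    proof (rule ccontr)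
      assume "{x, z} \<noteq> e"
      then have "{x, z} \<in> E - {e}" using h by blast
      then have "gdist V (E - {e}) x z \<le> 1" using x z by (rule gdist_edge[rotated 2])
      then show False using far nf1 by blast
    qed
    then have "(x = u1 \<and> z = u2) \<or> (x = u2 \<and> z = u1)" using e by (simp add: doubleton_eq_iff)
    then show ?thesis
    proof
      assume "x = u1 \<and> z = u2" then show ?thesis using cn_self[of z V E] by simp
    next
      assume "x = u2 \<and> z = u1" then show ?thesis using cn_self[of z V E] by simp
    qed
  next
    assume "\<exists>w\<in>V. x \<in> V \<and> z \<in> V \<and> {x, w} \<in> E \<and> {w, z} \<in> E"
    then obtain w where w: "w \<in> V" "{x, w} \<in> E" "{w, z} \<in> E" by blast
    have "{x, w} = e \<or> {w, z} = e"
    proof (rule ccontr)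
      assume "\<not> ({x, w} = e \<or> {w, z} = e)"
      then have "{x, w} \<in> E - {e}" "{w, z} \<in> E - {e}" using w by auto
      then have "gdist V (E - {e}) x z \<le> 2" by (rule gdist_path2[OF x w(1) z])
      then show False using far nf2 by blast
    qed
    then show ?thesis
    proof
      assume "{x, w} = e"
      then have "(x = u1 \<and> w = u2) \<or> (x = u2 \<and> w = u1)" using e by (simp add: doubleton_eq_iff)
      moreover have "z \<in> closed_nbhd V E w" using cn_adj[OF z w(3)] .
      ultimately show ?thesis by auto
    next
      assume "{w, z} = e"
      then have "(w = u1 \<and> z = u2) \<or> (w = u2 \<and> z = u1)" using e by (simp add: doubleton_eq_iff)
      moreover have "{w, x} \<in> E" using w(2) insert_commute by metis
      then have "x \<in> closed_nbhd V E w" using cn_adj[OF x] by blast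
      ultimately show ?thesis by auto
    qed
  qed
qed

lemma Pmem:
  assumes sg: "simple_graph V E" and d2: "\<And>u v. u \<in> V \<Longrightarrow> v \<in> V \<Longrightarrow> gdist V E u v \<le> 2"
    and e: "e = {u1, u2}" and x: "x \<in> V" and z: "z \<in> V" and xz: "x \<noteq> z"
    and far: "enat 2 < gdist V (E - {e}) x z"
  shows "x \<in> e \<or> z \<in> e"
  using F1[OF sg d2 e x z xz far] e by blast

lemma Kadj:
  assumes sg: "simple_graph V E" and d2: "\<And>u v. u \<in> V \<Longrightarrow> v \<in> V \<Longrightarrow> gdist V E u v \<le> 2"
    and e: "e = {u1, u2}" and eE: "e \<in> E" and w: "w \<in> V" and we: "w \<notin> e"
    and far: "enat 2 < gdist V (E - {e}) w u1"
  shows "{u2, w} \<in> E"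
proof -
  have u: "u1 \<in> V" "u2 \<in> V" "u1 \<noteq> u2" using sg_edge_V[OF sg] eE e by blast+
  have "w \<noteq> u1" "w \<noteq> u2" using we e by blast+
  then have "w \<in> closed_nbhd V E u2" using F1[OF sg d2 e w u(1) \<open>w \<noteq> u1\<close> far] u(3) by blast
  then show ?thesis using \<open>w \<noteq> u2\<close> unfolding closed_nbhd_def by blast
qed

lemma K:
  assumes sg: "simple_graph V E" and d2: "\<And>u v. u \<in> V \<Longrightarrow> v \<in> V \<Longrightarrow> gdist V E u v \<le> 2"
    and e: "e = {u1, u2}" and eE: "e \<in> E" and w: "w \<in> V" and we: "w \<notin> e"
    and far1: "enat 2 < gdist V (E - {e}) w u1" and far2: "enat 2 < gdist V (E - {e}) w u2"
  shows False
proof -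
  have u: "u1 \<in> V" "u2 \<in> V" "u1 \<noteq> u2" using sg_edge_V[OF sg] eE e by blast+
  have "{u2, w} \<in> E" using Kadj[OF sg d2 e eE w we far1] .
  then have "{w, u2} \<in> E - {e}" using we by (auto simp: insert_commute)
  then have "gdist V (E - {e}) w u2 \<le> 1" using w u(2) by (rule gdist_edge[rotated 2])
  then show False using far2 nf1 by blast
qed

lemma K':
  assumes sg: "simple_graph V E" and d2: "\<And>u v. u \<in> V \<Longrightarrow> v \<in> V \<Longrightarrow> gdist V E u v \<le> 2"
    and eE: "e \<in> E" and ab: "e = {a, b}" and w: "w \<in> V" and we: "w \<notin> e"
    and far1: "enat 2 < gdist V (E - {e}) w a" and far2: "enat 2 < gdist V (E - {e}) w b"
  shows False
  using K[OF sg d2 ab eE w we far1 far2] .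

lemma F2:
  assumes sg: "simple_graph V E" and d2: "\<And>u v. u \<in> V \<Longrightarrow> v \<in> V \<Longrightarrow> gdist V E u v \<le> 2"
    and e: "e = {u1, u2}" and eE: "e \<in> E"
    and V: "x \<in> V" "z \<in> V" "p \<in> V" and dist: "x \<noteq> z" "x \<noteq> p" "z \<noteq> p"
    and f1: "enat 2 < gdist V (E - {e}) x z" and f2: "enat 2 < gdist V (E - {e}) x p"
    and f3: "enat 2 < gdist V (E - {e}) z p"
  shows False
proof -
  have s1: "enat 2 < gdist V (E - {e}) z x" using f1 gdist_sym by metis
  have s2: "enat 2 < gdist V (E - {e}) p x" using f2 gdist_sym by metis
  have s3: "enat 2 < gdist V (E - {e}) p z" using f3 gdist_sym by metis
  have P1: "x \<in> e \<or> z \<in> e" using Pmem[OF sg d2 e V(1) V(2) dist(1) f1] .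
  have P2: "x \<in> e \<or> p \<in> e" using Pmem[OF sg d2 e V(1) V(3) dist(2) f2] .
  have P3: "z \<in> e \<or> p \<in> e" using Pmem[OF sg d2 e V(2) V(3) dist(3) f3] .
  have two: "\<And>a b. a \<in> e \<Longrightarrow> b \<in> e \<Longrightarrow> a \<noteq> b \<Longrightarrow> e = {a, b}" using e by blast
  show False
  proof (cases "x \<in> e")
    case False
    then have "z \<in> e" "p \<in> e" using P1 P2 by blast+
    then have "e = {z, p}" using two dist(3) by blast
    then show False using K'[OF sg d2 eE _ V(1) False f1 f2] by blast
  next
    case xe: True
    show False
    proof (cases "z \<in> e")
      case False
      then have "p \<in> e" using P3 by blast
      then have "e = {x, p}" using two dist(2) xe by blast
      then show False using K'[OF sg d2 eE _ V(2) False s1 f3] by blast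
    next
      case True
      then have "e = {x, z}" using two dist(1) xe by blast
      then have "p \<notin> e" using dist by blast
      then show False using K'[OF sg d2 eE \<open>e = {x, z}\<close> V(3) _ s2 s3] by blast
    qed
  qed
qed

lemma F3core:
  assumes d2: "\<And>u v. u \<in> V \<Longrightarrow> v \<in> V \<Longrightarrow> gdist V E u v \<le> 2"
    and V: "a \<in> V" "b \<in> V" "t \<in> V" and ae: "a \<notin> e" and be: "b \<notin> e" and ab: "a \<noteq> b"
    and bt: "{b, t} \<in> E"
  shows "gdist V (E - {e}) a t \<le> 3"
proof -
  have bt': "{b, t} \<in> E - {e}" using bt be by blast
  from gdist_le2_cases[OF d2[OF V(1,2)] ab] show ?thesis
  proof
    assume "a \<in> V \<and> b \<in> V \<and> {a, b} \<in> E"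
    then have "{a, b} \<in> E - {e}" using ae by blast
    then have "gdist V (E - {e}) a t \<le> 2" using gdist_path2[OF V(1,2,3) _ bt'] by blast
    then show ?thesis by (rule order_trans) (simp add: numeral_le_iff)
  next
    assume "\<exists>w\<in>V. a \<in> V \<and> b \<in> V \<and> {a, w} \<in> E \<and> {w, b} \<in> E"
    then obtain w where w: "w \<in> V" "{a, w} \<in> E" "{w, b} \<in> E" by blast
    then have "{a, w} \<in> E - {e}" "{w, b} \<in> E - {e}" using ae be by blast+
    then show ?thesis using gdist_path3[OF V(1) w(1) V(2,3) _ _ bt'] by blast
  qed
qed

lemma F3':
  assumes sg: "simple_graph V E" and d2: "\<And>u v. u \<in> V \<Longrightarrow> v \<in> V \<Longrightarrow> gdist V E u v \<le> 2"
    and eE: "e \<in> E" and ets: "e = {t, s}" and V: "a \<in> V" "b \<in> V"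
    and ae: "a \<notin> e" and be: "b \<notin> e" and ab: "a \<noteq> b"
    and fa: "enat 2 < gdist V (E - {e}) a t" and fb: "enat 2 < gdist V (E - {e}) b s"
  shows "gdist V (E - {e}) a t \<le> 3"
proof -
  have est: "e = {s, t}" using ets insert_commute by metis
  have "{t, b} \<in> E" using Kadj[OF sg d2 est eE V(2) be fb] .
  then have bt: "{b, t} \<in> E" using insert_commute by metis
  have "{t, s} \<in> E" using eE ets by simp
  then have tV: "t \<in> V" using sg_edge_V[OF sg] by blast
  show ?thesis using F3core[OF d2 V(1,2) tV ae be ab bt] .
qed

lemma F3:
  assumes sg: "simple_graph V E" and d2: "\<And>u v. u \<in> V \<Longrightarrow> v \<in> V \<Longrightarrow> gdist V E u v \<le> 2"
    and e: "e = {u1, u2}" and eE: "e \<in> E"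
    and V: "x \<in> V" "z \<in> V" "p \<in> V" "q \<in> V" and xz: "x \<noteq> z" and pq: "p \<noteq> q"
    and disj: "x \<noteq> p" "x \<noteq> q" "z \<noteq> p" "z \<noteq> q"
    and f1: "enat 2 < gdist V (E - {e}) x z" and f2: "enat 2 < gdist V (E - {e}) p q"
  shows "gdist V (E - {e}) x z \<le> 3"
proof -
  have s1: "enat 2 < gdist V (E - {e}) z x" using f1 gdist_sym by metis
  have s2: "enat 2 < gdist V (E - {e}) q p" using f2 gdist_sym by metis
  have P1: "x \<in> e \<or> z \<in> e" using Pmem[OF sg d2 e V(1) V(2) xz f1] .
  have P2: "p \<in> e \<or> q \<in> e" using Pmem[OF sg d2 e V(3) V(4) pq f2] .
  have two: "\<And>a b. a \<in> e \<Longrightarrow> b \<in> e \<Longrightarrow> a \<noteq> b \<Longrightarrow> e = {a, b}" using e by blast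
  have one: "\<And>a b c. a \<in> e \<Longrightarrow> b \<in> e \<Longrightarrow> c \<in> e \<Longrightarrow> a = b \<or> a = c \<or> b = c" using e by blast
  have ex1: "(x \<in> e \<and> z \<notin> e) \<or> (z \<in> e \<and> x \<notin> e)"
    using P1 P2 one[of x z p] one[of x z q] xz disj by blast
  have ex2: "(p \<in> e \<and> q \<notin> e) \<or> (q \<in> e \<and> p \<notin> e)"
    using P1 P2 one[of p q x] one[of p q z] pq disj by blast
  show ?thesis
  proof (cases "x \<in> e \<and> z \<notin> e")
    case c1: True
    show ?thesis
    proof (cases "p \<in> e \<and> q \<notin> e")
      case True
      have ee: "e = {x, p}" using two c1 True disj by blast
      have "gdist V (E - {e}) z x \<le> 3"
        using F3'[OF sg d2 eE ee V(2) V(4) conjunct2[OF c1] conjunct2[OF True] disj(4) s1 s2] .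
      then show ?thesis using gdist_sym by metis
    next
      case False
      then have c2: "q \<in> e \<and> p \<notin> e" using ex2 by blast
      have ee: "e = {x, q}" using two c1 c2 disj by blast
      have "gdist V (E - {e}) z x \<le> 3"
        using F3'[OF sg d2 eE ee V(2) V(3) conjunct2[OF c1] conjunct2[OF c2] disj(3) s1 f2] .
      then show ?thesis using gdist_sym by metis
    qed
  next
    case False
    then have c1: "z \<in> e \<and> x \<notin> e" using ex1 by blast
    show ?thesis
    proof (cases "p \<in> e \<and> q \<notin> e")
      case True
      have ee: "e = {z, p}" using two c1 True disj by blast
      show ?thesis
        using F3'[OF sg d2 eE ee V(1) V(4) conjunct2[OF c1] conjunct2[OF True] disj(2) f1 s2] .
    next
      case False
      then have c2: "q \<in> e \<and> p \<notin> e" using ex2 by blast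
      have ee: "e = {z, q}" using two c1 c2 disj by blast
      show ?thesis
        using F3'[OF sg d2 eE ee V(1) V(3) conjunct2[OF c1] conjunct2[OF c2] disj(1) f1 f2] .
    qed
  qed
qed



lemma forward:
  assumes sg: "simple_graph V E" and d2: "\<And>u v. u \<in> V \<Longrightarrow> v \<in> V \<Longrightarrow> gdist V E u v \<le> 2"
    and ne: "V \<noteq> {}" and eE: "{u1, u2} \<in> E"
    and lt: "packing_chromatic V (E - {{u1, u2}}) < card V - indep_num V E + 1"
    and noti: "\<not> indep_num V E < indep_num V (E - {{u1, u2}})"
  shows "\<exists>(a, b) \<in> {(u1, u2), (u2, u1)}. \<exists>y \<in> closed_nbhd V E a.
            gdist V (E - {{u1, u2}}) y b \<ge> 3 \<and>
            (\<exists>A. independent V E A \<and> card A = indep_num V E \<and> A \<inter> {y, b} = {})"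
proof -
  define e where "e = {u1, u2}"
  have e: "e = {u1, u2}" by (simp add: e_def)
  have eE': "e \<in> E" using eE e by simp
  have f: "finite V" using sg by (rule sg_finite)
  define k where "k = packing_chromatic V (E - {e})"
  obtain c where pc: "packing_coloring V (E - {e}) k c" using pc_attain[OF f] unfolding k_def by blast
  have kle: "k \<le> card V - indep_num V E" using lt unfolding k_def e_def by simp
  have rng: "\<And>v. v \<in> V \<Longrightarrow> c v \<in> {1..k}" using pc unfolding packing_coloring_def by blast
  have sep: "\<And>u v. u \<in> V \<Longrightarrow> v \<in> V \<Longrightarrow> u \<noteq> v \<Longrightarrow> c u = c v \<Longrightarrow> enat (c u) < gdist V (E - {e}) u v"
    using pc unfolding packing_coloring_def by blast
  define C1 where "C1 = {v \<in> V. c v = 1}"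
  have C1V: "C1 \<subseteq> V" unfolding C1_def by blast
  have ind: "independent V (E - {e}) C1" unfolding independent_def
  proof (intro conjI ballI)
    show "C1 \<subseteq> V" by (rule C1V)
    fix u v assume u: "u \<in> C1" and v: "v \<in> C1"
    show "{u, v} \<notin> E - {e}"
    proof
      assume uvE: "{u, v} \<in> E - {e}"
      then have "{u, v} \<in> E" by blast
      then have uv: "u \<in> V" "v \<in> V" "u \<noteq> v" using sg_edge_V[OF sg] by blast+
      have cu: "c u = 1" "c v = 1" using u v unfolding C1_def by auto
      have "enat (c u) < gdist V (E - {e}) u v" using sep[OF uv] cu by simp
      then have "enat 1 < gdist V (E - {e}) u v" using cu by simp
      moreover have "gdist V (E - {e}) u v \<le> 1" using gdist_edge[OF uv(1,2) uvE] .
      ultimately show False by (simp add: one_enat_def)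
    qed
  qed
  have "card C1 \<le> indep_num V (E - {e})" using indep_le[OF f ind] .
  also have "\<dots> \<le> indep_num V E" using noti unfolding e_def by simp
  finally have cC1: "card C1 \<le> indep_num V E" .
  define R where "R = V - C1"
  have RV: "R \<subseteq> V" unfolding R_def by blast
  have finR: "finite R" using RV f by (rule finite_subset)
  have cge2: "\<And>u. u \<in> R \<Longrightarrow> c u \<ge> 2"
  proof -
    fix u assume u: "u \<in> R"
    then have "c u \<in> {1..k}" "c u \<noteq> 1" using rng unfolding R_def C1_def by auto
    then show "c u \<ge> 2" by simp
  qed
  have farR: "\<And>u v. u \<in> R \<Longrightarrow> v \<in> R \<Longrightarrow> u \<noteq> v \<Longrightarrow> c u = c v \<Longrightarrow> enat 2 < gdist V (E - {e}) u v"
  proof -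
    fix u v assume u: "u \<in> R" and v: "v \<in> R" and uv: "u \<noteq> v" and cuv: "c u = c v"
    have "enat (c u) < gdist V (E - {e}) u v" using sep[OF _ _ uv cuv] u v RV by blast
    moreover have "enat 2 \<le> enat (c u)" using cge2[OF u] by simp
    ultimately show "enat 2 < gdist V (E - {e}) u v" by (meson le_less_trans)
  qed
  have img: "c ` R \<subseteq> {2..k}"
  proof
    fix x assume "x \<in> c ` R"
    then obtain v where v: "v \<in> R" "x = c v" by blast
    then have "c v \<in> {1..k}" using rng RV by blast
    then show "x \<in> {2..k}" using v cge2[OF v(1)] by simp
  qed
  have "card (c ` R) \<le> card {2..k}" using img by (rule card_mono[rotated]) simp
  then have cimg: "card (c ` R) \<le> k - 1" by simp
  have cR: "card R = card V - card C1" unfolding R_def using f C1V by (meson card_Diff_subset finite_subset)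
  obtain v0 where "v0 \<in> V" using ne by blast
  then have "c v0 \<in> {1..k}" by (rule rng)
  then have k1: "k \<ge> 1" by simp
  have ni: "\<not> inj_on c R"
  proof
    assume "inj_on c R"
    then have "card R = card (c ` R)" by (simp add: card_image)
    then show False using cimg cR cC1 kle k1 by linarith
  qed
  then obtain x z where xz: "x \<in> R" "z \<in> R" "x \<noteq> z" "c x = c z" unfolding inj_on_def by blast
  have xV: "x \<in> V" and zV: "z \<in> V" using xz RV by blast+
  have fxz: "enat 2 < gdist V (E - {e}) x z" using farR[OF xz(1,2,3,4)] .
  have inj2: "inj_on c (R - {z})"
  proof (rule inj_onI)
    fix p q assume p: "p \<in> R - {z}" and q: "q \<in> R - {z}" and cpq: "c p = c q"
    show "p = q"
    proof (rule ccontr)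
      assume pq: "p \<noteq> q"
      have pR: "p \<in> R" "p \<noteq> z" and qR: "q \<in> R" "q \<noteq> z" using p q by blast+
      have pV: "p \<in> V" and qV: "q \<in> V" using pR qR RV by blast+
      have fpq: "enat 2 < gdist V (E - {e}) p q" using farR[OF pR(1) qR(1) pq cpq] .
      show False
      proof (cases "c p = c x")
        case True
        show False
        proof (cases "p = x")
          case True
          have qx: "q \<noteq> x" using pq True by simp
          have f2: "enat 2 < gdist V (E - {e}) x q" using farR[OF xz(1) qR(1) qx[symmetric]] cpq True by simp
          have f3: "enat 2 < gdist V (E - {e}) z q" using farR[OF xz(2) qR(1) qR(2)[symmetric]] cpq True xz(4) by simp
          show False using F2[OF sg d2 e eE' xV zV qV xz(3) qx[symmetric] qR(2)[symmetric] fxz f2 f3] .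
        next
          case False
          have f2: "enat 2 < gdist V (E - {e}) x p" using farR[OF xz(1) pR(1) False[symmetric]] \<open>c p = c x\<close> by simp
          have f3: "enat 2 < gdist V (E - {e}) z p" using farR[OF xz(2) pR(1) pR(2)[symmetric]] \<open>c p = c x\<close> xz(4) by simp
          show False using F2[OF sg d2 e eE' xV zV pV xz(3) False[symmetric] pR(2)[symmetric] fxz f2 f3] .
        qed
      next
        case False
        have dj: "x \<noteq> p" "x \<noteq> q" "z \<noteq> p" "z \<noteq> q" using False cpq xz(4) by auto
        have d1: "gdist V (E - {e}) x z \<le> 3" using F3[OF sg d2 e eE' xV zV pV qV xz(3) pq dj fxz fpq] .
        have d2': "gdist V (E - {e}) p q \<le> 3"
          using F3[OF sg d2 e eE' pV qV xV zV pq xz(3) _ _ _ _ fpq fxz] dj by metis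
        have "c x \<ge> 2" "c p \<ge> 2" using cge2 xz(1) pR(1) by blast+
        then have "c x \<ge> 3 \<or> c p \<ge> 3" using False by linarith
        then show False
        proof
          assume c3: "c x \<ge> 3"
          have "enat (c x) < gdist V (E - {e}) x z" using sep[OF xV zV xz(3,4)] .
          then show False using nf3[OF d1 _ c3] by blast
        next
          assume c3: "c p \<ge> 3"
          have "enat (c p) < gdist V (E - {e}) p q" using sep[OF pV qV pq cpq] .
          then show False using nf3[OF d2' _ c3] by blast
        qed
      qed
    qed
  qed
  have "card (R - {z}) = card (c ` (R - {z}))" using inj2 by (simp add: card_image)
  also have "\<dots> \<le> card (c ` R)" using finR by (intro card_mono) auto
  finally have "card (R - {z}) \<le> k - 1" using cimg by linarith
  moreover have "card (R - {z}) = card R - 1" using xz(2) finR by simp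
  moreover have "card R \<ge> 1" using xz(2) finR by (metis card_0_eq empty_iff less_one not_le)
  ultimately have "card R \<le> k" using k1 by linarith
  then have "card V - card C1 \<le> card V - indep_num V E" using cR kle by linarith
  moreover have "indep_num V E \<le> card V" using indep_num_le[OF f] .
  moreover have "card C1 \<le> card V" using C1V f by (rule card_mono[rotated])
  ultimately have cC1': "card C1 \<ge> indep_num V E" by linarith
  have xC: "x \<notin> C1" and zC: "z \<notin> C1" using xz unfolding R_def by blast+
  have hF: "(x = u1 \<and> z \<in> closed_nbhd V E u2) \<or> (x = u2 \<and> z \<in> closed_nbhd V E u1)
     \<or> (z = u1 \<and> x \<in> closed_nbhd V E u2) \<or> (z = u2 \<and> x \<in> closed_nbhd V E u1)"
    using F1[OF sg d2 e xV zV xz(3) fxz] .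
  have notboth: "\<not> (u1 \<in> C1 \<and> u2 \<in> C1)" using hF xC zC by blast
  have indG: "independent V E C1" unfolding independent_def
  proof (intro conjI ballI)
    show "C1 \<subseteq> V" by (rule C1V)
    fix u v assume u: "u \<in> C1" and v: "v \<in> C1"
    show "{u, v} \<notin> E"
    proof
      assume uvE: "{u, v} \<in> E"
      show False
      proof (cases "{u, v} = e")
        case True
        then have "u1 \<in> {u, v}" "u2 \<in> {u, v}" using e by blast+
        then show False using notboth u v by blast
      next
        case False
        then have "{u, v} \<in> E - {e}" using uvE by blast
        then show False using ind u v unfolding independent_def by blast
      qed
    qed
  qed
  have cardC1: "card C1 = indep_num V E" using indep_le[OF f indG] cC1' by simp
  have fzx: "enat 2 < gdist V (E - {e}) z x" using fxz gdist_sym by metis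
  let ?goal = "\<exists>(a, b) \<in> {(u1, u2), (u2, u1)}. \<exists>y \<in> closed_nbhd V E a.
            gdist V (E - {{u1, u2}}) y b \<ge> 3 \<and>
            (\<exists>A. independent V E A \<and> card A = indep_num V E \<and> A \<inter> {y, b} = {})"
  have fin: "\<And>a b y. (a, b) \<in> {(u1, u2), (u2, u1)} \<Longrightarrow> y \<in> closed_nbhd V E a
     \<Longrightarrow> enat 2 < gdist V (E - {e}) y b \<Longrightarrow> y \<notin> C1 \<Longrightarrow> b \<notin> C1 \<Longrightarrow> ?goal"
  proof -
    fix a b y assume ab: "(a, b) \<in> {(u1, u2), (u2, u1)}" and y: "y \<in> closed_nbhd V E a"
      and fy: "enat 2 < gdist V (E - {e}) y b" and yC: "y \<notin> C1" and bC: "b \<notin> C1"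
    have P: "gdist V (E - {{u1, u2}}) y b \<ge> 3 \<and>
            (\<exists>A. independent V E A \<and> card A = indep_num V E \<and> A \<inter> {y, b} = {})"
      using fy three_le_iff[of "gdist V (E - {e}) y b"] indG cardC1 yC bC unfolding e_def by blast
    show ?goal using ab y P by blast
  qed
  from hF show ?thesis
  proof (elim disjE conjE)
    assume "x = u1" "z \<in> closed_nbhd V E u2"
    then show ?thesis using fin[of u2 u1 z] fzx zC xC by simp
  next
    assume "x = u2" "z \<in> closed_nbhd V E u1"
    then show ?thesis using fin[of u1 u2 z] fzx zC xC by simp
  next
    assume "z = u1" "x \<in> closed_nbhd V E u2"
    then show ?thesis using fin[of u2 u1 x] fxz zC xC by simp
  next
    assume "z = u2" "x \<in> closed_nbhd V E u1"
    then show ?thesis using fin[of u1 u2 x] fxz zC xC by simp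
  qed
qed



theorem theorem4p1:
  fixes V :: "'a set" and E :: "'a set set"
  assumes "simple_graph V E"
    and "diameter V E = 2"
  shows "chi_rho_critical V E \<longleftrightarrow>
    (\<forall>u1 u2. {u1, u2} \<in> E \<longrightarrow>
       indep_num V (E - {{u1, u2}}) > indep_num V E
       \<or> (\<exists>(a, b) \<in> {(u1, u2), (u2, u1)}. \<exists>y \<in> closed_nbhd V E a.
            gdist V (E - {{u1, u2}}) y b \<ge> 3 \<and>
            (\<exists>A. independent V E A \<and> card A = indep_num V E \<and> A \<inter> {y, b} = {})))"
proof -
  have sg: "simple_graph V E" by fact
  have d: "diameter V E = 2" by fact
  have f: "finite V" using sg by (rule sg_finite)
  have ne: "V \<noteq> {}" using d by (rule diam_ne)
  have d2: "\<And>u v. u \<in> V \<Longrightarrow> v \<in> V \<Longrightarrow> gdist V E u v \<le> 2" using diam_le[OF d] by blast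
  have chi: "packing_chromatic V E = card V - indep_num V E + 1" using chi_eq[OF sg d] .
  show ?thesis
  proof
    assume crit: "chi_rho_critical V E"
    show "\<forall>u1 u2. {u1, u2} \<in> E \<longrightarrow>
       indep_num V (E - {{u1, u2}}) > indep_num V E
       \<or> (\<exists>(a, b) \<in> {(u1, u2), (u2, u1)}. \<exists>y \<in> closed_nbhd V E a.
            gdist V (E - {{u1, u2}}) y b \<ge> 3 \<and>
            (\<exists>A. independent V E A \<and> card A = indep_num V E \<and> A \<inter> {y, b} = {}))"
    proof (intro allI impI)
      fix u1 u2 assume eE: "{u1, u2} \<in> E"
      have sub: "subgraph V (E - {{u1, u2}}) V E" unfolding subgraph_def
        using sg_edge_sub[OF sg] by blast
      have "(V, E - {{u1, u2}}) \<noteq> (V, E)" using eE by blast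
      then have lt: "packing_chromatic V (E - {{u1, u2}}) < card V - indep_num V E + 1"
        using crit sub chi unfolding chi_rho_critical_def by metis
      show "indep_num V (E - {{u1, u2}}) > indep_num V E
       \<or> (\<exists>(a, b) \<in> {(u1, u2), (u2, u1)}. \<exists>y \<in> closed_nbhd V E a.
            gdist V (E - {{u1, u2}}) y b \<ge> 3 \<and>
            (\<exists>A. independent V E A \<and> card A = indep_num V E \<and> A \<inter> {y, b} = {}))"
      proof (cases "indep_num V E < indep_num V (E - {{u1, u2}})")
        case True then show ?thesis by blast
      next
        case False
        then show ?thesis using forward[OF sg d2 ne eE lt False] by blast
      qed
    qed
  next
    assume H: "\<forall>u1 u2. {u1, u2} \<in> E \<longrightarrow>
       indep_num V (E - {{u1, u2}}) > indep_num V E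
       \<or> (\<exists>(a, b) \<in> {(u1, u2), (u2, u1)}. \<exists>y \<in> closed_nbhd V E a.
            gdist V (E - {{u1, u2}}) y b \<ge> 3 \<and>
            (\<exists>A. independent V E A \<and> card A = indep_num V E \<and> A \<inter> {y, b} = {}))"
    have edge_del: "packing_chromatic V (E - {e}) \<le> card V - indep_num V E" if eE: "e \<in> E" for e
    proof -
      obtain u1 u2 where e: "e = {u1, u2}" and u: "u1 \<noteq> u2" "u1 \<in> V" "u2 \<in> V"
        using sg_edge[OF sg eE] by blast
      have "{u1, u2} \<in> E" using eE e by simp
      then have H': "indep_num V (E - {e}) > indep_num V E
       \<or> (\<exists>(a, b) \<in> {(u1, u2), (u2, u1)}. \<exists>y \<in> closed_nbhd V E a.
            gdist V (E - {e}) y b \<ge> 3 \<and>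
            (\<exists>A. independent V E A \<and> card A = indep_num V E \<and> A \<inter> {y, b} = {}))"
        using H e by blast
      then show ?thesis
      proof
        assume gt: "indep_num V (E - {e}) > indep_num V E"
        obtain A where A: "independent V (E - {e}) A" "card A = indep_num V (E - {e})"
          using indep_ex[OF f] by blast
        have "packing_chromatic V (E - {e}) \<le> card V - card A + 1" using L1[OF f A(1)] .
        moreover have "card A \<le> card V" using A(2) indep_num_le[OF f] by metis
        ultimately show ?thesis using A(2) gt by linarith
      next
        assume "\<exists>(a, b) \<in> {(u1, u2), (u2, u1)}. \<exists>y \<in> closed_nbhd V E a.
            gdist V (E - {e}) y b \<ge> 3 \<and>
            (\<exists>A. independent V E A \<and> card A = indep_num V E \<and> A \<inter> {y, b} = {})"
        then obtain a b y A where ab: "(a, b) \<in> {(u1, u2), (u2, u1)}" and y: "y \<in> closed_nbhd V E a"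
          and g3: "gdist V (E - {e}) y b \<ge> 3" and A: "independent V E A" "card A = indep_num V E"
          and Ayb: "A \<inter> {y, b} = {}"
          by blast
        have aV: "a \<in> V" and bV: "b \<in> V" using ab u by auto
        have yV: "y \<in> V" using y aV unfolding closed_nbhd_def by blast
        have far: "enat 2 < gdist V (E - {e}) y b" using g3 three_le_iff by blast
        have yb: "y \<noteq> b"
        proof
          assume "y = b"
          then have "gdist V (E - {e}) y b = 0" using gdist_self bV by metis
          then show False using far by simp
        qed
        have A': "independent V (E - {e}) A" using A(1) by (rule indep_sub) blast
        have "packing_chromatic V (E - {e}) \<le> card V - card A"
          using L2[OF f A' yV bV yb _ _ far] Ayb by blast
        then show ?thesis using A(2) by simp
      qed
    qed
    show "chi_rho_critical V E" unfolding chi_rho_critical_def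
    proof (intro allI impI)
      fix V' E' assume h: "subgraph V' E' V E \<and> (V', E') \<noteq> (V, E)"
      have VV: "V' \<subseteq> V" and EE: "E' \<subseteq> E" and Ein: "\<forall>e\<in>E'. e \<subseteq> V'"
        using h unfolding subgraph_def by blast+
      obtain e where eE: "e \<in> E" and sub2: "subgraph V' E' V (E - {e})"
      proof (cases "E' = E")
        case False
        then obtain e where "e \<in> E" "e \<notin> E'" using EE by blast
        then show ?thesis using that VV EE Ein unfolding subgraph_def by blast
      next
        case True
        then have "V' \<noteq> V" using h by blast
        then obtain v where v: "v \<in> V" "v \<notin> V'" using VV by blast
        obtain u where u: "u \<in> V" "u \<noteq> v" using diam_other[OF d v(1)] by blast
        have "\<exists>e\<in>E. v \<in> e"
          using gdist_le2_cases[OF d2[OF v(1) u(1)] u(2)[symmetric]] by blast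
        then obtain e where "e \<in> E" "v \<in> e" by blast
        then have "e \<subseteq> V'" using Ein True by blast
        then show ?thesis using v \<open>v \<in> e\<close> by blast
      qed
      have "packing_chromatic V' E' \<le> packing_chromatic V (E - {e})" using pc_mono[OF sub2 f] .
      also have "\<dots> \<le> card V - indep_num V E" using edge_del[OF eE] .
      also have "\<dots> < packing_chromatic V E" using chi by simp
      finally show "packing_chromatic V' E' < packing_chromatic V E" .
    qed
  qed
qed

end
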